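(* Let $G$ be a network whose underlying simple graph is a cactus. Then $R_G(q)$ is Schur quasi-stable, i.e. every complex zero $q$ of $R_G$ satisfies $|q|\le1$.
   Context: A network is a finite connected loopless multigraph, possibly with multiple edges. $R_G(q)$ is the probability that deleting each edge independently with probability $q$ leaves a connected spanning subgraph; it is a polynomial in $q$. The underlying simple graph has the same vertices and one edge for each adjacent pair. A cactus is a connected simple graph in which each edge lies in at most one cycle. *)

theory Defs
  imports "HOL-Computational_Algebra.Polynomial" Complex_Main
begin

text \<open>A network: finite nonempty vertex set V, finite edge set E (edges are abstract
  objects, so parallel edges are allowed), and an endpoint map ends assigning to each
  edge a set of exactly two distinct vertices of V (so no loops).\<close>

definition multigraph :: "'v set \<Rightarrow> 'e set \<Rightarrow> ('e \<Rightarrow> 'v set) \<Rightarrow> bool" where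
  "multigraph V E ends \<longleftrightarrow> finite V \<and> V \<noteq> {} \<and> finite E \<and>
     (\<forall>e\<in>E. ends e \<subseteq> V \<and> card (ends e) = 2)"

definition edge_rel :: "'e set \<Rightarrow> ('e \<Rightarrow> 'v set) \<Rightarrow> ('v \<times> 'v) set" where
  "edge_rel S ends = {(u, v). \<exists>e\<in>S. ends e = {u, v}}"

definition spanning_connected :: "'v set \<Rightarrow> 'e set \<Rightarrow> ('e \<Rightarrow> 'v set) \<Rightarrow> bool" where
  "spanning_connected V S ends \<longleftrightarrow> (\<forall>u\<in>V. \<forall>v\<in>V. (u, v) \<in> (edge_rel S ends)\<^sup>*)"

definition network :: "'v set \<Rightarrow> 'e set \<Rightarrow> ('e \<Rightarrow> 'v set) \<Rightarrow> bool" where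
  "network V E ends \<longleftrightarrow> multigraph V E ends \<and> spanning_connected V E ends"

text \<open>All-terminal reliability polynomial: each edge is deleted independently with
  probability q; R(q) = sum over connected spanning edge subsets S of
  (1-q)^|S| q^|E - S|.\<close>
definition reliability_poly :: "'v set \<Rightarrow> 'e set \<Rightarrow> ('e \<Rightarrow> 'v set) \<Rightarrow> complex poly" where
  "reliability_poly V E ends =
     (\<Sum>S\<in>{S. S \<subseteq> E \<and> spanning_connected V S ends}.
        [:1, -1:] ^ card S * [:0, 1:] ^ card (E - S))"

definition adj :: "'e set \<Rightarrow> ('e \<Rightarrow> 'v set) \<Rightarrow> 'v \<Rightarrow> 'v \<Rightarrow> bool" where
  "adj E ends u v \<longleftrightarrow> u \<noteq> v \<and> (\<exists>e\<in>E. ends e = {u, v})"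

definition is_cycle :: "'e set \<Rightarrow> ('e \<Rightarrow> 'v set) \<Rightarrow> 'v list \<Rightarrow> bool" where
  "is_cycle E ends vs \<longleftrightarrow> length vs \<ge> 3 \<and> distinct vs \<and>
     (\<forall>i<length vs. adj E ends (vs ! i) (vs ! ((i + 1) mod length vs)))"

definition cycle_edges :: "'v list \<Rightarrow> 'v set set" where
  "cycle_edges vs = {{vs ! i, vs ! ((i + 1) mod length vs)} | i. i < length vs}"

text \<open>Cactus: connected simple graph in which every edge lies in at most one cycle.\<close>
definition underlying_is_cactus :: "'v set \<Rightarrow> 'e set \<Rightarrow> ('e \<Rightarrow> 'v set) \<Rightarrow> bool" where
  "underlying_is_cactus V E ends \<longleftrightarrow>
     (\<forall>u\<in>V. \<forall>v\<in>V. (u, v) \<in> {(x, y). adj E ends x y}\<^sup>*) \<and>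
     (\<forall>c1 c2 x y. is_cycle E ends c1 \<and> is_cycle E ends c2 \<and>
        {x, y} \<in> cycle_edges c1 \<and> {x, y} \<in> cycle_edges c2 \<longrightarrow>
        cycle_edges c1 = cycle_edges c2)"

end

theory Submission
  imports Defs
begin

definition conn :: "'v set \<Rightarrow> ('v \<times> 'v) set \<Rightarrow> bool" where
  "conn W R \<longleftrightarrow> (\<forall>x\<in>W. \<forall>y\<in>W. (x, y) \<in> R\<^sup>*)"

lemma avoid:
  assumes "(x,y) \<in> R1\<^sup>*" "x \<noteq> cc" "y \<noteq> cc"
    "\<And>p q. (p,q)\<in>R1 \<Longrightarrow> p\<noteq>cc \<Longrightarrow> q\<noteq>cc \<Longrightarrow> (p,q)\<in>R2\<^sup>*"
    "\<And>a b. (a,cc)\<in>R1 \<Longrightarrow> (cc,b)\<in>R1 \<Longrightarrow> (a,b)\<in>R2\<^sup>*"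
  shows "(x,y)\<in>R2\<^sup>*"
proof -
  from assms(1) have "(y \<noteq> cc \<longrightarrow> (x,y)\<in>R2\<^sup>*) \<and> (y = cc \<longrightarrow> (\<exists>a. (a,cc)\<in>R1 \<and> (x,a)\<in>R2\<^sup>*))"
  proof (induction rule: rtrancl_induct)
    case base
    then show ?case using assms(2) by auto
  next
    case (step y z)
    show ?case
    proof (cases "z = cc")
      case True
      then show ?thesis using step by (cases "y = cc") auto
    next
      case False
      show ?thesis
      proof (cases "y = cc")
        case True
        then obtain a where "(a,cc)\<in>R1" "(x,a)\<in>R2\<^sup>*" using step by auto
        moreover have "(a,z)\<in>R2\<^sup>*" using assms(5) calculation(1) step(2) True by auto
        ultimately show ?thesis using False by auto
      next
        case f2: False
        then have "(x,y)\<in>R2\<^sup>*" using step by auto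
        moreover have "(y,z)\<in>R2\<^sup>*" using assms(4) step(2) False f2 by auto
        ultimately show ?thesis using False by auto
      qed
    qed
  qed
  then show ?thesis using assms(3) by auto
qed

lemma conn_iso:
  assumes "R \<subseteq> W \<times> W" "v0 \<notin> W" "W \<noteq> {}"
  shows "\<not> conn (insert v0 W) R"
proof
  assume c: "conn (insert v0 W) R"
  obtain y where y: "y \<in> W" using assms(3) by auto
  then have "(v0, y) \<in> R\<^sup>*" using c unfolding conn_def by auto
  then show False
  proof (cases rule: converse_rtranclE)
    case base then show ?thesis using y assms(2) by auto
  next
    case (step z) then show ?thesis using assms(1,2) by auto
  qed
qed

lemma conn_leaf:
  assumes "R \<subseteq> W \<times> W" "v0 \<notin> W" "u \<in> W"
  shows "conn (insert v0 W) ({(v0,u),(u,v0)} \<union> R) \<longleftrightarrow> conn W R"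
proof
  assume c: "conn (insert v0 W) ({(v0,u),(u,v0)} \<union> R)"
  show "conn W R" unfolding conn_def
  proof (intro ballI)
    fix x y assume xy: "x \<in> W" "y \<in> W"
    then have "(x,y) \<in> ({(v0,u),(u,v0)} \<union> R)\<^sup>*" using c unfolding conn_def by auto
    then show "(x,y) \<in> R\<^sup>*"
      by (rule avoid[where cc=v0]) (use xy assms in auto)
  qed
next
  assume c: "conn W R"
  let ?R1 = "{(v0,u),(u,v0)} \<union> R"
  have sub: "R\<^sup>* \<subseteq> ?R1\<^sup>*" by (rule rtrancl_mono) auto
  have a: "(v0,u) \<in> ?R1\<^sup>*" "(u,v0) \<in> ?R1\<^sup>*" by auto
  show "conn (insert v0 W) ?R1" unfolding conn_def
  proof (intro ballI)
    fix x y assume xy: "x \<in> insert v0 W" "y \<in> insert v0 W"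
    have h: "z \<in> W \<Longrightarrow> (u,z) \<in> ?R1\<^sup>* \<and> (z,u) \<in> ?R1\<^sup>*" for z
      using c assms(3) sub unfolding conn_def by blast
    show "(x,y) \<in> ?R1\<^sup>*"
      using xy
    proof (elim insertE)
      assume "x = v0" "y = v0" then show ?thesis by auto
    next
      assume "x = v0" "y \<in> W" then show ?thesis using h a(1) by (meson rtrancl_trans)
    next
      assume "x \<in> W" "y = v0" then show ?thesis using h a(2) by (meson rtrancl_trans)
    next
      assume "x \<in> W" "y \<in> W" then show ?thesis using c sub unfolding conn_def by blast
    qed
  qed
qed

lemma conn_series:
  assumes "R \<subseteq> W \<times> W" "v0 \<notin> W" "u \<in> W" "w \<in> W"
  shows "conn (insert v0 W) ({(v0,u),(u,v0)} \<union> ({(v0,w),(w,v0)} \<union> R)) \<longleftrightarrow> conn W ({(u,w),(w,u)} \<union> R)"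
proof
  assume c: "conn (insert v0 W) ({(v0,u),(u,v0)} \<union> ({(v0,w),(w,v0)} \<union> R))"
  show "conn W ({(u,w),(w,u)} \<union> R)" unfolding conn_def
  proof (intro ballI)
    fix x y assume xy: "x \<in> W" "y \<in> W"
    then have "(x,y) \<in> ({(v0,u),(u,v0)} \<union> ({(v0,w),(w,v0)} \<union> R))\<^sup>*" using c unfolding conn_def by auto
    then show "(x,y) \<in> ({(u,w),(w,u)} \<union> R)\<^sup>*"
      by (rule avoid[where cc=v0]) (use xy assms in auto)
  qed
next
  assume c: "conn W ({(u,w),(w,u)} \<union> R)"
  let ?R1 = "{(v0,u),(u,v0)} \<union> ({(v0,w),(w,v0)} \<union> R)"
  have a: "(v0,u) \<in> ?R1\<^sup>*" "(u,v0) \<in> ?R1\<^sup>*" "(v0,w) \<in> ?R1\<^sup>*" "(w,v0) \<in> ?R1\<^sup>*" by auto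
  have "{(u,w),(w,u)} \<union> R \<subseteq> ?R1\<^sup>*" using a by (auto intro: rtrancl_trans)
  then have sub: "({(u,w),(w,u)} \<union> R)\<^sup>* \<subseteq> ?R1\<^sup>*" by (rule rtrancl_subset_rtrancl)
  show "conn (insert v0 W) ?R1" unfolding conn_def
  proof (intro ballI)
    fix x y assume xy: "x \<in> insert v0 W" "y \<in> insert v0 W"
    have h: "z \<in> W \<Longrightarrow> (u,z) \<in> ?R1\<^sup>* \<and> (z,u) \<in> ?R1\<^sup>*" for z
      using c assms(3) sub unfolding conn_def by blast
    show "(x,y) \<in> ?R1\<^sup>*"
      using xy
    proof (elim insertE)
      assume "x = v0" "y = v0" then show ?thesis by auto
    next
      assume "x = v0" "y \<in> W" then show ?thesis using h a(1) by (meson rtrancl_trans)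
    next
      assume "x \<in> W" "y = v0" then show ?thesis using h a(2) by (meson rtrancl_trans)
    next
      assume "x \<in> W" "y \<in> W" then show ?thesis using c sub unfolding conn_def by blast
    qed
  qed
qed

lemma sc_conn: "spanning_connected V S ends = conn V (edge_rel S ends)"
  unfolding spanning_connected_def conn_def by simp

definition Zs :: "'v set \<Rightarrow> 'e set \<Rightarrow> ('e \<Rightarrow> 'v set) \<Rightarrow> ('e \<Rightarrow> complex) \<Rightarrow> complex" where
  "Zs V E ends x = (\<Sum>S\<in>Pow E. if spanning_connected V S ends then \<Prod>e\<in>S. x e else 0)"

lemma sum_Pow_split:
  assumes "finite E" "e \<in> E"
  shows "(\<Sum>S\<in>Pow E. g S) = (\<Sum>S\<in>Pow (E - {e}). g S + g (insert e S))"
proof -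
  have E: "E = insert e (E - {e})" using assms by auto
  have "Pow E = Pow (E - {e}) \<union> insert e ` Pow (E - {e})"
    by (subst E, rule Pow_insert)
  moreover have "Pow (E - {e}) \<inter> insert e ` Pow (E - {e}) = {}" by auto
  moreover have "inj_on (insert e) (Pow (E - {e}))" unfolding inj_on_def by blast
  ultimately show ?thesis using assms(1)
    by (simp add: sum.union_disjoint sum.reindex sum.distrib)
qed

lemma edge_rel_insert:
  assumes "ends a = {p, q}"
  shows "edge_rel (insert a S) ends = {(p,q),(q,p)} \<union> edge_rel S ends"
  using assms unfolding edge_rel_def by (auto simp: doubleton_eq_iff)

lemma edge_rel_cong:
  assumes "\<And>e. e \<in> S \<Longrightarrow> ends e = ends' e"
  shows "edge_rel S ends = edge_rel S ends'"
  using assms unfolding edge_rel_def by auto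

lemma edge_rel_sub:
  assumes "\<And>e. e \<in> S \<Longrightarrow> ends e \<subseteq> W"
  shows "edge_rel S ends \<subseteq> W \<times> W"
  using assms unfolding edge_rel_def by auto

lemma Zs_parallel:
  assumes fin: "finite E" and ef: "e \<in> E" "f \<in> E" "e \<noteq> f" "ends e = ends f"
  shows "Zs V E ends x = Zs V (E - {f}) ends (x(e := (1 + x e) * (1 + x f) - 1))"
proof -
  let ?x' = "x(e := (1 + x e) * (1 + x f) - 1)"
  let ?E0 = "E - {e} - {f}"
  let ?t = "\<lambda>S. if spanning_connected V S ends then \<Prod>e\<in>S. x e else 0"
  let ?t' = "\<lambda>S. if spanning_connected V S ends then \<Prod>e\<in>S. ?x' e else 0"
  have "Zs V E ends x = (\<Sum>S\<in>Pow (E - {e}). ?t S + ?t (insert e S))"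
    unfolding Zs_def by (rule sum_Pow_split[OF fin ef(1)])
  also have "\<dots> = (\<Sum>S\<in>Pow ?E0. (?t S + ?t (insert e S)) + (?t (insert f S) + ?t (insert e (insert f S))))"
    by (rule sum_Pow_split) (use fin ef in auto)
  also have "\<dots> = (\<Sum>S\<in>Pow ?E0. ?t' S + ?t' (insert e S))"
  proof (rule sum.cong[OF refl])
    fix S assume S: "S \<in> Pow ?E0"
    then have fS: "finite S" using fin by (auto intro: finite_subset)
    have eS: "e \<notin> S" "f \<notin> S" using S by auto
    have r1: "edge_rel (insert f S) ends = edge_rel (insert e S) ends"
      using ef(4) unfolding edge_rel_def by auto
    have r2: "edge_rel (insert e (insert f S)) ends = edge_rel (insert e S) ends"
      using ef(4) unfolding edge_rel_def by auto
    have p0: "(\<Prod>e\<in>S. ?x' e) = (\<Prod>e\<in>S. x e)" using eS by (intro prod.cong) auto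
    have p1: "(\<Prod>e\<in>insert e S. ?x' e) = ((1 + x e) * (1 + x f) - 1) * (\<Prod>e\<in>S. x e)"
      using fS eS p0 by simp
    have p2: "(\<Prod>e\<in>insert f S. x e) = x f * (\<Prod>e\<in>S. x e)" using fS eS by simp
    have p3: "(\<Prod>e\<in>insert e S. x e) = x e * (\<Prod>e\<in>S. x e)" using fS eS by simp
    have p4: "(\<Prod>e\<in>insert e (insert f S). x e) = x e * x f * (\<Prod>e\<in>S. x e)" using fS eS ef(3) by simp
    show "(?t S + ?t (insert e S)) + (?t (insert f S) + ?t (insert e (insert f S))) = ?t' S + ?t' (insert e S)"
      unfolding spanning_connected_def r1 r2 p0 p1 p2 p3 p4
      by (simp add: algebra_simps)
  qed
  also have "\<dots> = Zs V (E - {f}) ends ?x'"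
    unfolding Zs_def
    by (rule sym, subst sum_Pow_split[of _ e]) (use fin ef in \<open>auto simp: Diff_insert2[symmetric] insert_commute\<close>)
  finally show ?thesis .
qed

lemma Zs_leaf:
  assumes fin: "finite E" and a: "a \<in> E" "ends a = {v0, u}" and v: "v0 \<in> V" "u \<in> V" "u \<noteq> v0"
    and oth: "\<And>e. e \<in> E - {a} \<Longrightarrow> ends e \<subseteq> V - {v0}"
  shows "Zs V E ends x = x a * Zs (V - {v0}) (E - {a}) ends x"
proof -
  let ?W = "V - {v0}"
  have V: "V = insert v0 ?W" using v by auto
  let ?t = "\<lambda>S. if spanning_connected V S ends then \<Prod>e\<in>S. x e else 0"
  have "Zs V E ends x = (\<Sum>S\<in>Pow (E - {a}). ?t S + ?t (insert a S))"
    unfolding Zs_def by (rule sum_Pow_split[OF fin a(1)])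
  also have "\<dots> = (\<Sum>S\<in>Pow (E - {a}). x a * (if spanning_connected ?W S ends then \<Prod>e\<in>S. x e else 0))"
  proof (rule sum.cong[OF refl])
    fix S assume S: "S \<in> Pow (E - {a})"
    then have fS: "finite S" using fin by (auto intro: finite_subset)
    have aS: "a \<notin> S" using S by auto
    have R: "edge_rel S ends \<subseteq> ?W \<times> ?W" using S oth by (intro edge_rel_sub) auto
    have c0: "\<not> spanning_connected V S ends"
      unfolding sc_conn by (subst V, rule conn_iso[OF R]) (use v in auto)
    have c1: "spanning_connected V (insert a S) ends \<longleftrightarrow> spanning_connected ?W S ends"
      unfolding sc_conn edge_rel_insert[of ends a v0 u, OF a(2)] by (subst V, rule conn_leaf[OF R]) (use v in auto)
    show "?t S + ?t (insert a S) = x a * (if spanning_connected ?W S ends then \<Prod>e\<in>S. x e else 0)"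
      using c0 c1 fS aS by simp
  qed
  also have "\<dots> = x a * Zs (V - {v0}) (E - {a}) ends x"
    unfolding Zs_def by (simp add: sum_distrib_left)
  finally show ?thesis .
qed

lemma Zs_series:
  assumes fin: "finite E" and a: "a \<in> E" "ends a = {v0, u}" and b: "b \<in> E" "ends b = {v0, w}" "a \<noteq> b"
    and v: "v0 \<in> V" "u \<in> V - {v0}" "w \<in> V - {v0}"
    and oth: "\<And>e. e \<in> E - {a} - {b} \<Longrightarrow> ends e \<subseteq> V - {v0}"
    and nz: "x a + x b \<noteq> 0"
  shows "Zs V E ends x = (x a + x b) * Zs (V - {v0}) (E - {a}) (ends(b := {u, w})) (x(b := x a * x b / (x a + x b)))"
proof -
  let ?W = "V - {v0}"
  let ?ends' = "ends(b := {u, w})"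
  let ?x' = "x(b := x a * x b / (x a + x b))"
  have V: "V = insert v0 ?W" using v by auto
  let ?E0 = "E - {a} - {b}"
  let ?t = "\<lambda>S. if spanning_connected V S ends then \<Prod>e\<in>S. x e else 0"
  let ?t' = "\<lambda>S. if spanning_connected ?W S ?ends' then \<Prod>e\<in>S. ?x' e else 0"
  have "Zs V E ends x = (\<Sum>S\<in>Pow (E - {a}). ?t S + ?t (insert a S))"
    unfolding Zs_def by (rule sum_Pow_split[OF fin a(1)])
  also have "\<dots> = (\<Sum>S\<in>Pow ?E0. (?t S + ?t (insert a S)) + (?t (insert b S) + ?t (insert a (insert b S))))"
    by (rule sum_Pow_split) (use fin a b in auto)
  also have "\<dots> = (\<Sum>S\<in>Pow ?E0. (x a + x b) * (?t' S + ?t' (insert b S)))"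
  proof (rule sum.cong[OF refl])
    fix S assume S: "S \<in> Pow ?E0"
    then have fS: "finite S" using fin by (auto intro: finite_subset)
    have aS: "a \<notin> S" "b \<notin> S" using S by auto
    have R: "edge_rel S ends \<subseteq> ?W \<times> ?W" using S oth by (intro edge_rel_sub) auto
    have RR: "edge_rel S ?ends' = edge_rel S ends" using aS by (intro edge_rel_cong) auto
    have eb: "edge_rel (insert b S) ?ends' = {(u,w),(w,u)} \<union> edge_rel S ends"
      using RR by (subst edge_rel_insert) auto
    have c0: "\<not> spanning_connected V S ends"
      unfolding sc_conn by (subst V, rule conn_iso[OF R]) (use v in auto)
    have c1: "spanning_connected V (insert a S) ends \<longleftrightarrow> spanning_connected ?W S ?ends'"
      unfolding sc_conn edge_rel_insert[of ends a v0 u, OF a(2)] RR by (subst V, rule conn_leaf[OF R]) (use v in auto)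
    have c2: "spanning_connected V (insert b S) ends \<longleftrightarrow> spanning_connected ?W S ?ends'"
      unfolding sc_conn edge_rel_insert[of ends b v0 w, OF b(2)] RR by (subst V, rule conn_leaf[OF R]) (use v in auto)
    have c3: "spanning_connected V (insert a (insert b S)) ends \<longleftrightarrow> spanning_connected ?W (insert b S) ?ends'"
      unfolding sc_conn edge_rel_insert[of ends a v0 u, OF a(2)] edge_rel_insert[of ends b v0 w, OF b(2)] eb
      by (subst V, rule conn_series[OF R]) (use v in auto)
    have k: "(x a + x b) * (x a * x b / (x a + x b) * P) = x a * x b * P" for P
      using nz by (simp add: field_simps del: times_divide_eq_left)
    have p0: "(\<Prod>e\<in>S. ?x' e) = (\<Prod>e\<in>S. x e)" using aS by (intro prod.cong) auto
    have p1: "(\<Prod>e\<in>insert b S. ?x' e) = x a * x b / (x a + x b) * (\<Prod>e\<in>S. x e)"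
      using fS aS p0 by simp
    have p2: "(\<Prod>e\<in>insert b S. x e) = x b * (\<Prod>e\<in>S. x e)" using fS aS by simp
    have p3: "(\<Prod>e\<in>insert a S. x e) = x a * (\<Prod>e\<in>S. x e)" using fS aS by simp
    have p4: "(\<Prod>e\<in>insert a (insert b S). x e) = x a * x b * (\<Prod>e\<in>S. x e)" using fS aS b(3) by simp
    show "(?t S + ?t (insert a S)) + (?t (insert b S) + ?t (insert a (insert b S))) = (x a + x b) * (?t' S + ?t' (insert b S))"
    proof -
      have e1: "(x a + x b) * ?t' S = (if spanning_connected ?W S ?ends' then (x a + x b) * (\<Prod>e\<in>S. x e) else 0)"
        unfolding p0 by simp
      have e2: "(x a + x b) * ?t' (insert b S) = (if spanning_connected ?W (insert b S) ?ends' then x a * x b * (\<Prod>e\<in>S. x e) else 0)"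
        unfolding p1 k using nz by simp
      show ?thesis
        unfolding distrib_left e1 e2 c1 c2 c3 p2 p3 p4 using c0
        by (simp add: algebra_simps)
    qed
  qed
  also have "\<dots> = (x a + x b) * Zs ?W (E - {a}) ?ends' ?x'"
    unfolding Zs_def sum_distrib_left[symmetric]
    by (rule arg_cong[where f="\<lambda>z. (x a + x b) * z"], rule sym, rule sum_Pow_split) (use fin b in auto)
  finally show ?thesis .
qed

lemma cycle_edges_image:
  "cycle_edges c = (\<lambda>i. {c!i, c!((i+1) mod length c)}) ` {..<length c}"
  unfolding cycle_edges_def by auto

lemma cycle_edge_subset:
  assumes "X \<in> cycle_edges c" shows "X \<subseteq> set c"
proof -
  obtain i where i: "i < length c" "X = {c!i, c!((i+1) mod length c)}"
    using assms unfolding cycle_edges_def by auto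
  then have "0 < length c" by auto
  then have "(i+1) mod length c < length c" by simp
  then show ?thesis using i by auto
qed

lemma is_cycle_mono:
  assumes "is_cycle E ends c" "\<And>p q. adj E ends p q \<Longrightarrow> adj E2 ends2 p q"
  shows "is_cycle E2 ends2 c"
  using assms unfolding is_cycle_def by auto

lemma adj_sym: "adj E ends p q \<longleftrightarrow> adj E ends q p"
  unfolding adj_def by (auto simp: insert_commute)

lemma rot_surj:
  assumes "(n::nat) > 0"
  shows "(\<lambda>k. (m + k) mod n) ` {..<n} = {..<n}"
proof
  show "(\<lambda>k. (m + k) mod n) ` {..<n} \<subseteq> {..<n}" using assms by auto
  show "{..<n} \<subseteq> (\<lambda>k. (m + k) mod n) ` {..<n}"
  proof
    fix j assume j: "j \<in> {..<n}"
    let ?k = "(j + (n - m mod n)) mod n"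
    have le: "m mod n \<le> n" using assms by (simp add: order_less_imp_le)
    have "(m + ?k) mod n = (m mod n + (j + (n - m mod n))) mod n"
      by (simp add: mod_add_right_eq mod_add_left_eq)
    also have "m mod n + (j + (n - m mod n)) = j + n" using le by simp
    finally have "(m + ?k) mod n = j" using j by simp
    moreover have "?k < n" using assms by simp
    ultimately show "j \<in> (\<lambda>k. (m + k) mod n) ` {..<n}" by force
  qed
qed

lemma rotate_cycle:
  assumes "is_cycle E ends c"
  shows "is_cycle E ends (rotate m c) \<and> cycle_edges (rotate m c) = cycle_edges c"
proof -
  let ?n = "length c"
  have n: "?n \<ge> 3" using assms unfolding is_cycle_def by auto
  have n0: "?n > 0" using n by linarith
  have pr2: "rotate m c ! ((k+1) mod ?n) = c ! (((m+k) mod ?n + 1) mod ?n)"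
    if "k < ?n" for k
  proof -
    have "(k+1) mod ?n < ?n" using n0 by simp
    then have "rotate m c ! ((k+1) mod ?n) = c ! ((m + (k+1) mod ?n) mod ?n)"
      by (simp add: nth_rotate)
    also have "(m + (k+1) mod ?n) mod ?n = ((m+k) mod ?n + 1) mod ?n"
    proof -
      have "(m + (k+1) mod ?n) mod ?n = (m + (k+1)) mod ?n" by (rule mod_add_right_eq)
      also have "\<dots> = ((m+k) mod ?n + 1) mod ?n" by (simp add: mod_Suc_eq)
      finally show ?thesis .
    qed
    finally show ?thesis .
  qed
  have pr: "{rotate m c ! k, rotate m c ! ((k+1) mod ?n)} = {c ! ((m+k) mod ?n), c ! (((m+k) mod ?n + 1) mod ?n)}"
    if "k < ?n" for k using pr2[OF that] that by (simp add: nth_rotate)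
  have ic: "is_cycle E ends (rotate m c)"
    unfolding is_cycle_def
  proof (intro conjI allI impI)
    show "3 \<le> length (rotate m c)" using n by simp
    show "distinct (rotate m c)" using assms unfolding is_cycle_def by simp
    fix k assume k: "k < length (rotate m c)"
    have j: "(m+k) mod ?n < ?n" using n0 by simp
    have "adj E ends (c ! ((m+k) mod ?n)) (c ! (((m+k) mod ?n + 1) mod ?n))"
      using assms j unfolding is_cycle_def by blast
    moreover have "rotate m c ! ((k+1) mod ?n) = c ! (((m+k) mod ?n + 1) mod ?n)"
      using pr2[of k] k by simp
    ultimately show "adj E ends (rotate m c ! k) (rotate m c ! ((k + 1) mod length (rotate m c)))"
      using k by (simp add: nth_rotate)
  qed
  have "cycle_edges (rotate m c) = (\<lambda>k. {c ! ((m+k) mod ?n), c ! (((m+k) mod ?n + 1) mod ?n)}) ` {..<?n}"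
    unfolding cycle_edges_image using pr by (intro image_cong) auto
  also have "\<dots> = (\<lambda>i. {c!i, c!((i+1) mod ?n)}) ` ((\<lambda>k. (m + k) mod ?n) ` {..<?n})"
    by (simp add: image_image)
  also have "\<dots> = cycle_edges c"
    unfolding cycle_edges_image using n by (subst rot_surj) auto
  finally show ?thesis using ic by simp
qed

lemma lift0:
  assumes cyc: "is_cycle E' ends' d" and last: "{d ! (length d - 1), d ! 0} = {u, w}"
    and v0d: "v0 \<notin> set d" and au: "adj E ends v0 u" and aw: "adj E ends v0 w"
    and F1: "\<And>p q. adj E' ends' p q \<Longrightarrow> {p,q} \<noteq> {u,w} \<Longrightarrow> adj E ends p q"
  shows "is_cycle E ends (d @ [v0]) \<and> cycle_edges (d @ [v0]) = (cycle_edges d - {{u,w}}) \<union> {{u,v0},{v0,w}}"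
proof -
  define n where "n = length d"
  have n: "n \<ge> 3" using cyc unfolding is_cycle_def n_def by auto
  have dist: "distinct d" using cyc unfolding is_cycle_def by auto
  define P where "P = (\<lambda>k. {d!k, d!(k+1)}) ` {..<n-1}"
  have ne: "{d!k, d!(k+1)} \<noteq> {u,w}" if k: "k < n - 1" for k
  proof
    assume "{d!k, d!(k+1)} = {u,w}"
    then have "{d!k, d!(k+1)} = {d!(n-1), d!0}" using last n_def by simp
    then have "(d!k = d!(n-1) \<and> d!(k+1) = d!0) \<or> (d!k = d!0 \<and> d!(k+1) = d!(n-1))"
      by (auto simp: doubleton_eq_iff)
    moreover have "k < length d" "k+1 < length d" "n - 1 < length d" "0 < length d" using k n n_def by auto
    ultimately have "(k = n-1 \<and> k+1 = 0) \<or> (k = 0 \<and> k + 1 = n - 1)"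
      using dist by (auto simp: nth_eq_iff_index_eq)
    then show False using k n by auto
  qed
  have adjk: "adj E ends (d!k) (d!(k+1))" if k: "k < n - 1" for k
  proof -
    have kn: "k < length d" using k n_def by auto
    have "adj E' ends' (d!k) (d!((k+1) mod length d))" using cyc kn unfolding is_cycle_def by blast
    moreover have "(k+1) mod length d = k+1" using k n_def by simp
    ultimately show ?thesis using F1 ne[OF k] by auto
  qed
  have U: "{..<n} = insert (n-1) {..<n-1}" using n by auto
  have CEd: "cycle_edges d = insert {d!(n-1), d!0} P"
  proof -
    have "cycle_edges d = (\<lambda>i. {d!i, d!((i+1) mod n)}) ` {..<n}"
      unfolding cycle_edges_image n_def ..
    also have "\<dots> = insert {d!(n-1), d!0} ((\<lambda>i. {d!i, d!((i+1) mod n)}) ` {..<n-1})"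
      unfolding U using n by simp
    also have "(\<lambda>i. {d!i, d!((i+1) mod n)}) ` {..<n-1} = P"
      unfolding P_def by (intro image_cong) auto
    finally show ?thesis .
  qed
  let ?c = "d @ [v0]"
  have len: "length ?c = n + 1" unfolding n_def by simp
  have cn: "?c ! k = d ! k" if "k < n" for k using that unfolding n_def by (simp add: nth_append)
  have cN: "?c ! n = v0" unfolding n_def by simp
  have U2: "{..<n+1} = insert n (insert (n-1) {..<n-1})" using n by auto
  have CEc: "cycle_edges ?c = insert {d!(n-1), v0} (insert {v0, d!0} P)"
  proof -
    have "cycle_edges ?c = (\<lambda>i. {?c!i, ?c!((i+1) mod (n+1))}) ` {..<n+1}"
      unfolding cycle_edges_image len ..
    also have "\<dots> = insert {v0, d!0} (insert {d!(n-1), v0} ((\<lambda>i. {?c!i, ?c!((i+1) mod (n+1))}) ` {..<n-1}))"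
      unfolding U2 using n cn cN by simp
    also have "(\<lambda>i. {?c!i, ?c!((i+1) mod (n+1))}) ` {..<n-1} = P"
      unfolding P_def using cn by (intro image_cong) auto
    finally show ?thesis by auto
  qed
  have dl: "d!(n-1) \<in> {u,w}" "d!0 \<in> {u,w}" using last n_def by auto
  have adjv: "adj E ends v0 z" if "z \<in> {u,w}" for z using that au aw by auto
  have ic: "is_cycle E ends ?c"
    unfolding is_cycle_def
  proof (intro conjI allI impI)
    show "3 \<le> length ?c" using len n by simp
    show "distinct ?c" using dist v0d by simp
    fix k assume k: "k < length ?c"
    consider "k < n - 1" | "k = n - 1" | "k = n" using k len by linarith
    then show "adj E ends (?c ! k) (?c ! ((k + 1) mod length ?c))"
    proof cases
      case 1
      then have "(k+1) mod length ?c = k + 1" using len n by simp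
      then show ?thesis using 1 adjk[OF 1] cn n by simp
    next
      case 2
      then have "(k+1) mod length ?c = n" using len n by simp
      have "n - 1 < n" using n by simp
      then have "?c ! k = d ! (n-1)" using 2 cn by simp
      moreover have "adj E ends (d!(n-1)) v0" using adjv[OF dl(1)] adj_sym by metis
      ultimately show ?thesis using cN \<open>(k+1) mod length ?c = n\<close> by simp
    next
      case 3
      then have "(k+1) mod length ?c = 0" using len by simp
      then show ?thesis using 3 cn cN n adjv[OF dl(2)] by simp
    qed
  qed
  have notin: "{u,w} \<notin> P"
  proof
    assume "{u,w} \<in> P"
    then obtain k where "k < n - 1" "{u,w} = {d!k, d!(k+1)}" unfolding P_def by blast
    then show False using ne by metis
  qed
  have AB: "{{d!(n-1), v0}, {v0, d!0}} = {{u,v0},{v0,w}}"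
    using last n_def by (auto simp: doubleton_eq_iff insert_commute)
  have last': "{d!(n-1), d!0} = {u,w}" using last n_def by simp
  have "cycle_edges ?c = P \<union> {{d!(n-1), v0}, {v0, d!0}}" unfolding CEc by blast
  also have "\<dots> = P \<union> {{u,v0},{v0,w}}" by (simp only: AB)
  also have "P = cycle_edges d - {{u,w}}" unfolding CEd last' using notin by blast
  finally show ?thesis using ic by simp
qed

definition cactus2 :: "'e set \<Rightarrow> ('e \<Rightarrow> 'v set) \<Rightarrow> bool" where
  "cactus2 E ends \<longleftrightarrow> (\<forall>c1 c2 x y. is_cycle E ends c1 \<and> is_cycle E ends c2 \<and>
        {x, y} \<in> cycle_edges c1 \<and> {x, y} \<in> cycle_edges c2 \<longrightarrow>
        cycle_edges c1 = cycle_edges c2)"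

lemma lift:
  assumes cyc: "is_cycle E' ends' c'" and uw: "{u,w} \<in> cycle_edges c'"
    and v0d: "v0 \<notin> set c'" and au: "adj E ends v0 u" and aw: "adj E ends v0 w"
    and F1: "\<And>p q. adj E' ends' p q \<Longrightarrow> {p,q} \<noteq> {u,w} \<Longrightarrow> adj E ends p q"
  shows "\<exists>c. is_cycle E ends c \<and> cycle_edges c = (cycle_edges c' - {{u,w}}) \<union> {{u,v0},{v0,w}}"
proof -
  define n where "n = length c'"
  have n: "n \<ge> 3" using cyc unfolding is_cycle_def n_def by auto
  obtain i where i: "i < n" "{u,w} = {c'!i, c'!((i+1) mod n)}"
    using uw unfolding cycle_edges_def n_def by auto
  define d where "d = rotate (Suc i) c'"
  have rc: "is_cycle E' ends' d" "cycle_edges d = cycle_edges c'"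
    unfolding d_def using rotate_cycle[OF cyc, of "Suc i"] by blast+
  have ld: "length d = n" unfolding d_def n_def by simp
  have sd: "set d = set c'" unfolding d_def by simp
  have d1: "d ! (length d - 1) = c' ! i"
  proof -
    have "d ! (n - 1) = c' ! ((Suc i + (n - 1)) mod n)"
      unfolding d_def n_def using n n_def by (simp del: rotate_Suc add: nth_rotate)
    also have "(Suc i + (n - 1)) mod n = i" using n i by (simp add: add.commute)
    finally show ?thesis using ld by simp
  qed
  have d0: "d ! 0 = c' ! ((i+1) mod n)"
  proof -
    have "0 < length c'" using n n_def by linarith
    then show ?thesis unfolding d_def n_def by (simp del: rotate_Suc add: nth_rotate)
  qed
  have "{d ! (length d - 1), d ! 0} = {u, w}" using d1 d0 i by simp
  from lift0[OF rc(1) this _ au aw F1] v0d sd rc(2)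
  show ?thesis by metis
qed

lemma cycle_nonrep:
  assumes cyc: "is_cycle E' ends' c" and nuw: "{u,w} \<notin> cycle_edges c"
    and F1: "\<And>p q. adj E' ends' p q \<Longrightarrow> {p,q} \<noteq> {u,w} \<Longrightarrow> adj E ends p q"
  shows "is_cycle E ends c"
  unfolding is_cycle_def
proof (intro conjI allI impI)
  show "3 \<le> length c" "distinct c" using cyc unfolding is_cycle_def by auto
  fix i assume i: "i < length c"
  have "{c!i, c!((i+1) mod length c)} \<in> cycle_edges c" unfolding cycle_edges_def using i by blast
  then have "{c!i, c!((i+1) mod length c)} \<noteq> {u,w}" using nuw by metis
  moreover have "adj E' ends' (c!i) (c!((i+1) mod length c))" using cyc i unfolding is_cycle_def by blast
  ultimately show "adj E ends (c!i) (c!((i+1) mod length c))" using F1 by blast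
qed

lemma cycle_verts:
  assumes cyc: "is_cycle E' ends' c" and nv: "\<And>p q. adj E' ends' p q \<Longrightarrow> p \<noteq> v0"
  shows "v0 \<notin> set c"
proof
  assume "v0 \<in> set c"
  then obtain i where "i < length c" "c ! i = v0" by (auto simp: in_set_conv_nth)
  moreover have "adj E' ends' (c!i) (c!((i+1) mod length c))" using cyc calculation unfolding is_cycle_def by blast
  ultimately show False using nv by blast
qed

lemma cactus_series:
  assumes cac: "cactus2 E ends"
    and F1: "\<And>p q. adj E' ends' p q \<Longrightarrow> {p,q} \<noteq> {u,w} \<Longrightarrow> adj E ends p q"
    and nv: "\<And>p q. adj E' ends' p q \<Longrightarrow> p \<noteq> v0"
    and au: "adj E ends v0 u" and aw: "adj E ends v0 w"
  shows "cactus2 E' ends'"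
proof -
  have vs: "v0 \<notin> set c" if "is_cycle E' ends' c" for c
    by (rule cycle_verts[OF that]) (erule nv)
  define Lf where "Lf X = (if {u,w} \<in> X then (X - {{u,w}}) \<union> {{u,v0},{v0,w}} else X)" for X
  have one: "\<exists>C. is_cycle E ends C \<and> cycle_edges C = Lf (cycle_edges c)" if c: "is_cycle E' ends' c" for c
  proof (cases "{u,w} \<in> cycle_edges c")
    case True
    then show ?thesis using lift[OF c True vs[OF c] au aw F1] unfolding Lf_def by simp
  next
    case False
    then show ?thesis using cycle_nonrep[OF c False F1] unfolding Lf_def by auto
  qed
  have nov: "v0 \<notin> Z" if "is_cycle E' ends' c" "Z \<in> cycle_edges c" for c Z
    using cycle_edge_subset[OF that(2)] vs[OF that(1)] by blast
  show ?thesis unfolding cactus2_def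
  proof (intro allI impI, elim conjE)
    fix c1 c2 x y
    assume c1: "is_cycle E' ends' c1" and c2: "is_cycle E' ends' c2"
      and x1: "{x, y} \<in> cycle_edges c1" and x2: "{x, y} \<in> cycle_edges c2"
    obtain C1 where C1: "is_cycle E ends C1" "cycle_edges C1 = Lf (cycle_edges c1)" using one[OF c1] by blast
    obtain C2 where C2: "is_cycle E ends C2" "cycle_edges C2 = Lf (cycle_edges c2)" using one[OF c2] by blast
    have "\<exists>p q. {p,q} \<in> Lf (cycle_edges c1) \<and> {p,q} \<in> Lf (cycle_edges c2)"
    proof (cases "{x,y} = {u,w}")
      case True
      then show ?thesis using x1 x2 unfolding Lf_def by auto
    next
      case False
      then show ?thesis using x1 x2 unfolding Lf_def by auto
    qed
    then have eq: "Lf (cycle_edges c1) = Lf (cycle_edges c2)"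
      using cac C1 C2 unfolding cactus2_def by metis
    have n1: "{u,v0} \<notin> cycle_edges c1" "{v0,w} \<notin> cycle_edges c1" using nov[OF c1] by auto
    have n2: "{u,v0} \<notin> cycle_edges c2" "{v0,w} \<notin> cycle_edges c2" using nov[OF c2] by auto
    show "cycle_edges c1 = cycle_edges c2"
    proof (cases "{u,w} \<in> cycle_edges c1"; cases "{u,w} \<in> cycle_edges c2")
      assume a: "{u,w} \<in> cycle_edges c1" "{u,w} \<in> cycle_edges c2"
      then have "(cycle_edges c1 - {{u,w}}) \<union> {{u,v0},{v0,w}} = (cycle_edges c2 - {{u,w}}) \<union> {{u,v0},{v0,w}}"
        using eq unfolding Lf_def by simp
      then have "cycle_edges c1 - {{u,w}} = cycle_edges c2 - {{u,w}}" using n1 n2 by blast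
      then show ?thesis using a by blast
    next
      assume a: "{u,w} \<in> cycle_edges c1" "{u,w} \<notin> cycle_edges c2"
      then have "{u,v0} \<in> cycle_edges c2" using eq unfolding Lf_def by (metis UnI2 insertI1)
      then show ?thesis using n2 by blast
    next
      assume a: "{u,w} \<notin> cycle_edges c1" "{u,w} \<in> cycle_edges c2"
      then have "{u,v0} \<in> cycle_edges c1" using eq unfolding Lf_def by (metis UnI2 insertI1)
      then show ?thesis using n1 by blast
    next
      assume a: "{u,w} \<notin> cycle_edges c1" "{u,w} \<notin> cycle_edges c2"
      then show ?thesis using eq unfolding Lf_def by simp
    qed
  qed
qed

definition spath :: "'v set \<Rightarrow> 'e set \<Rightarrow> ('e \<Rightarrow> 'v set) \<Rightarrow> 'v list \<Rightarrow> bool" where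
  "spath V E ends p \<longleftrightarrow> p \<noteq> [] \<and> distinct p \<and> set p \<subseteq> V \<and>
     (\<forall>i. Suc i < length p \<longrightarrow> adj E ends (p!i) (p!Suc i))"

lemma adj_in_V:
  assumes "multigraph V E ends" "adj E ends p q" shows "p \<in> V" "q \<in> V"
  using assms unfolding multigraph_def adj_def by auto

lemma adj_irrefl: "adj E ends p q \<Longrightarrow> p \<noteq> q"
  unfolding adj_def by auto

lemma take_cycle:
  assumes sp: "spath V E ends p" and k: "2 \<le> k" "k < length p" and a: "adj E ends (p!k) (p!0)"
  shows "is_cycle E ends (take (k+1) p)"
  unfolding is_cycle_def
proof (intro conjI allI impI)
  show "3 \<le> length (take (k+1) p)" using k by simp
  show "distinct (take (k+1) p)" using sp unfolding spath_def by simp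
  fix l assume l: "l < length (take (k+1) p)"
  then have l': "l < k + 1" using k by simp
  show "adj E ends (take (k+1) p ! l) (take (k+1) p ! ((l + 1) mod length (take (k+1) p)))"
  proof (cases "l < k")
    case True
    then have "(l+1) mod length (take (k+1) p) = l + 1" using k by simp
    moreover have "adj E ends (p!l) (p!Suc l)" using sp True k unfolding spath_def by auto
    ultimately show ?thesis using True k by simp
  next
    case False
    then have "l = k" using l' by simp
    moreover have "(k+1) mod length (take (k+1) p) = 0" using k by simp
    ultimately show ?thesis using a k by simp
  qed
qed

lemma ce_mem: "i < length c \<Longrightarrow> {c!i, c!((i+1) mod length c)} \<in> cycle_edges c"
  unfolding cycle_edges_def by blast

lemma take_edge01:
  assumes "2 \<le> k" "k < length p"
  shows "{p!0, p!1} \<in> cycle_edges (take (k+1) p)"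
proof -
  have "{take (k+1) p ! 0, take (k+1) p ! ((0+1) mod length (take (k+1) p))} \<in> cycle_edges (take (k+1) p)"
    by (rule ce_mem) (use assms in simp)
  moreover have "(0+1) mod length (take (k+1) p) = 1" using assms by simp
  ultimately show ?thesis using assms by simp
qed

lemma take_edge_last:
  assumes "2 \<le> k" "k < length p"
  shows "{p!(k-1), p!k} \<in> cycle_edges (take (k+1) p)"
proof -
  have "{take (k+1) p ! (k-1), take (k+1) p ! ((k-1+1) mod length (take (k+1) p))} \<in> cycle_edges (take (k+1) p)"
    by (rule ce_mem) (use assms in simp)
  moreover have "(k-1+1) mod length (take (k+1) p) = k" using assms by simp
  ultimately show ?thesis using assms by simp
qed

lemma two_back:
  assumes sp: "spath V E ends p" and cac: "cactus2 E ends"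
    and ij: "2 \<le> i" "i < j" "j < length p"
    and ai: "adj E ends (p!0) (p!i)" and aj: "adj E ends (p!0) (p!j)"
  shows False
proof -
  have c1: "is_cycle E ends (take (i+1) p)" using take_cycle[OF sp] ij ai adj_sym by (metis less_trans)
  have c2: "is_cycle E ends (take (j+1) p)" using take_cycle[OF sp] ij aj adj_sym by (metis le_less_trans order.strict_implies_order)
  have e1: "{p!0, p!1} \<in> cycle_edges (take (i+1) p)" using take_edge01[of i p] ij by simp
  have e2: "{p!0, p!1} \<in> cycle_edges (take (j+1) p)" using take_edge01[of j p] ij by simp
  have eq: "cycle_edges (take (i+1) p) = cycle_edges (take (j+1) p)"
    using cac c1 c2 e1 e2 unfolding cactus2_def by blast
  have "{p!(j-1), p!j} \<in> cycle_edges (take (i+1) p)" using take_edge_last[of j p] ij eq by simp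
  then have "p!j \<in> set (take (i+1) p)" using cycle_edge_subset by blast
  then obtain l where l: "l < length (take (i+1) p)" "take (i+1) p ! l = p ! j"
    by (auto simp: in_set_conv_nth)
  then have "p ! l = p ! j" "l < i + 1" by auto
  moreover have "distinct p" using sp unfolding spath_def by simp
  ultimately have "l = j" using ij by (simp add: nth_eq_iff_index_eq)
  then show False using \<open>l < i + 1\<close> ij by simp
qed

lemma low_degree:
  assumes mg: "multigraph V E ends" and sc: "spanning_connected V E ends"
    and cac: "cactus2 E ends" and cV: "card V \<ge> 2"
  shows "\<exists>v0 u. adj E ends v0 u \<and> ((\<forall>y. adj E ends v0 y \<longrightarrow> y = u) \<or>
           (\<exists>w. w \<noteq> u \<and> adj E ends v0 w \<and> (\<forall>y. adj E ends v0 y \<longrightarrow> y = u \<or> y = w)))"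
proof -
  have fV: "finite V" using mg unfolding multigraph_def by simp
  obtain v where v: "v \<in> V" using cV by fastforce
  have s1: "spath V E ends [v]" unfolding spath_def using v by simp
  have bd: "\<forall>q. spath V E ends q \<longrightarrow> length q < Suc (card V)"
  proof (intro allI impI)
    fix q assume "spath V E ends q"
    then have "distinct q" "set q \<subseteq> V" unfolding spath_def by auto
    then have "length q \<le> card V" using fV by (metis card_mono distinct_card)
    then show "length q < Suc (card V)" by simp
  qed
  obtain p where sp: "spath V E ends p" and mx: "\<forall>q. spath V E ends q \<longrightarrow> length q \<le> length p"
    using ex_has_greatest_nat[of "spath V E ends" "[v]" length "Suc (card V)", OF s1 bd] by blast
  define v0 where "v0 = p ! 0"
  have pne: "p \<noteq> []" using sp unfolding spath_def by simp
  have v0V: "v0 \<in> V" using sp pne unfolding spath_def v0_def by (meson nth_mem length_greater_0_conv subsetD)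
  have inset: "y \<in> set p" if a: "adj E ends v0 y" for y
  proof (rule ccontr)
    assume ny: "y \<notin> set p"
    have "spath V E ends (y # p)"
      unfolding spath_def
    proof (intro conjI allI impI)
      show "y # p \<noteq> []" by simp
      show "distinct (y # p)" using sp ny unfolding spath_def by simp
      show "set (y # p) \<subseteq> V" using sp adj_in_V[OF mg a] unfolding spath_def by simp
      fix i assume i: "Suc i < length (y # p)"
      show "adj E ends ((y # p) ! i) ((y # p) ! Suc i)"
      proof (cases i)
        case 0
        then show ?thesis using a adj_sym v0_def by (metis nth_Cons_0 nth_Cons_Suc)
      next
        case (Suc m)
        then show ?thesis using sp i unfolding spath_def by simp
      qed
    qed
    then have "length (y # p) \<le> length p" using mx by blast
    then show False by simp
  qed
  obtain z where z: "z \<in> V" "z \<noteq> v0"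
  proof -
    have "\<not> V \<subseteq> {v0}"
    proof
      assume "V \<subseteq> {v0}"
      then have "card V \<le> card {v0}" by (intro card_mono) auto
      then show False using cV by simp
    qed
    then show ?thesis using that by blast
  qed
  have "(v0, z) \<in> (edge_rel E ends)\<^sup>*" using sc v0V z unfolding spanning_connected_def by blast
  then obtain y0 where y0: "adj E ends v0 y0"
  proof (cases rule: converse_rtranclE)
    case base then show ?thesis using z by simp
  next
    case (step y)
    then obtain e where e: "e \<in> E" "ends e = {v0, y}" unfolding edge_rel_def by auto
    then have "card {v0, y} = 2" using mg unfolding multigraph_def by metis
    then have "v0 \<noteq> y" by (cases "v0 = y") auto
    then show ?thesis using e that unfolding adj_def by blast
  qed
  have dist: "distinct p" using sp unfolding spath_def by simp
  have idx: "\<exists>k. 1 \<le> k \<and> k < length p \<and> y = p!k" if a: "adj E ends v0 y" for y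
  proof -
    obtain k where k: "k < length p" "y = p!k" using inset[OF a] by (auto simp: in_set_conv_nth)
    moreover have "k \<noteq> 0" using adj_irrefl[OF a] k v0_def by (cases k) auto
    ultimately show ?thesis by (metis One_nat_def Suc_leI neq0_conv)
  qed
  obtain k0 where k0: "1 \<le> k0" "k0 < length p" using idx[OF y0] by blast
  define u where "u = p ! 1"
  have au: "adj E ends v0 u" using sp k0 unfolding spath_def v0_def u_def by auto
  show ?thesis
  proof (cases "\<forall>y. adj E ends v0 y \<longrightarrow> y = u")
    case True
    then show ?thesis using au by blast
  next
    case False
    then obtain w where aw: "adj E ends v0 w" and wu: "w \<noteq> u" by blast
    obtain m where m: "1 \<le> m" "m < length p" "w = p!m" using idx[OF aw] by blast
    have m2: "2 \<le> m" using m wu u_def by (cases "m = 1") auto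
    have "\<forall>y. adj E ends v0 y \<longrightarrow> y = u \<or> y = w"
    proof (intro allI impI)
      fix y assume ay: "adj E ends v0 y"
      obtain k where k: "1 \<le> k" "k < length p" "y = p!k" using idx[OF ay] by blast
      show "y = u \<or> y = w"
      proof (cases "k = 1")
        case True then show ?thesis using k u_def by simp
      next
        case False
        then have k2: "2 \<le> k" using k by simp
        consider "k < m" | "k = m" | "m < k" by linarith
        then show ?thesis
        proof cases
          case 1
          then show ?thesis using two_back[OF sp cac k2 1 m(2)] ay aw k m v0_def by simp
        next
          case 2 then show ?thesis using k m by simp
        next
          case 3
          then show ?thesis using two_back[OF sp cac m2 3 k(2)] ay aw k m v0_def by simp
        qed
      qed
    qed
    then show ?thesis using au aw wu by blast
  qed
qed

lemma D_iff: "cmod (1 + z) < 1 \<longleftrightarrow> z \<noteq> 0 \<and> Re (inverse z) < -1/2"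
proof -
  define a where "a = Re z"
  define b where "b = Im z"
  have c: "cmod (1 + z) < 1 \<longleftrightarrow> (1 + a)^2 + b^2 < 1"
  proof -
    have "cmod (1 + z) ^ 2 = (1 + a)^2 + b^2" unfolding a_def b_def by (simp add: cmod_power2)
    moreover have "cmod (1 + z) < 1 \<longleftrightarrow> cmod (1 + z) ^ 2 < 1"
      by (metis abs_norm_cancel abs_square_less_1)
    ultimately show ?thesis by simp
  qed
  have r: "Re (inverse z) = a / (a^2 + b^2)" unfolding a_def b_def by (simp add: power2_eq_square)
  have nz: "z \<noteq> 0 \<longleftrightarrow> a^2 + b^2 > 0"
    unfolding a_def b_def by (simp add: sum_power2_gt_zero_iff complex_eq_iff)
  show ?thesis
  proof (cases "z = 0")
    case True then show ?thesis by simp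
  next
    case False
    then have q: "a^2 + b^2 > 0" using nz by simp
    have "Re (inverse z) < -1/2 \<longleftrightarrow> 2 * a < -(a^2 + b^2)"
      unfolding r using q by (simp add: divide_less_eq field_simps)
    also have "\<dots> \<longleftrightarrow> (1 + a)^2 + b^2 < 1" by (simp add: power2_eq_square algebra_simps) linarith
    finally show ?thesis using c False by simp
  qed
qed

lemma series_weight:
  assumes a: "cmod (1 + \<alpha>) < 1" and b: "cmod (1 + \<beta>) < 1"
  shows "\<alpha> + \<beta> \<noteq> 0 \<and> cmod (1 + \<alpha> * \<beta> / (\<alpha> + \<beta>)) < 1"
proof -
  have a': "\<alpha> \<noteq> 0" "Re (inverse \<alpha>) < -1/2" using a D_iff by auto
  have b': "\<beta> \<noteq> 0" "Re (inverse \<beta>) < -1/2" using b D_iff by auto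
  define s where "s = inverse \<alpha> + inverse \<beta>"
  have rs: "Re s < -1" unfolding s_def using a' b' by simp
  then have s0: "s \<noteq> 0" by auto
  have sum: "\<alpha> + \<beta> = \<alpha> * \<beta> * s" unfolding s_def using a' b' by (simp add: field_simps)
  then have ne: "\<alpha> + \<beta> \<noteq> 0" using a' b' s0 by simp
  have "\<alpha> * \<beta> / (\<alpha> + \<beta>) = inverse s" unfolding sum using a' b' s0 by (simp add: field_simps)
  moreover have "cmod (1 + inverse s) < 1" unfolding D_iff using rs s0 by simp
  ultimately show ?thesis using ne by simp
qed

definition Inv :: "'v set \<Rightarrow> 'e set \<Rightarrow> ('e \<Rightarrow> 'v set) \<Rightarrow> ('e \<Rightarrow> complex) \<Rightarrow> bool" where
  "Inv V E ends x \<longleftrightarrow> multigraph V E ends \<and> spanning_connected V E ends \<and> cactus2 E ends \<and>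
     (\<forall>e\<in>E. cmod (1 + x e) < 1)"

lemma card2_ends:
  assumes "card (ends e) = 2" "v0 \<in> ends e"
  shows "\<exists>y. y \<noteq> v0 \<and> ends e = {v0, y}"
proof -
  obtain p q where pq: "ends e = {p, q}" "p \<noteq> q" using assms(1) unfolding card_2_iff by blast
  show ?thesis
  proof (cases "v0 = p")
    case True then show ?thesis using pq by auto
  next
    case False
    then have "v0 = q" using pq assms(2) by blast
    then have "ends e = {v0, p}" using pq by blast
    then show ?thesis using pq \<open>v0 = q\<close> by blast
  qed
qed

lemma Zs_single:
  assumes "V = {v}"
  shows "Zs V {} ends x = 1"
proof -
  have "spanning_connected V {} ends" using assms unfolding spanning_connected_def by simp
  then show ?thesis unfolding Zs_def by simp
qed

lemma cactus_mono:
  assumes "cactus2 E ends" "\<And>p q. adj E' ends' p q \<Longrightarrow> adj E ends p q"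
  shows "cactus2 E' ends'"
  unfolding cactus2_def
proof (intro allI impI)
  fix c1 c2 x y
  assume h: "is_cycle E' ends' c1 \<and> is_cycle E' ends' c2 \<and> {x, y} \<in> cycle_edges c1 \<and> {x, y} \<in> cycle_edges c2"
  then have "is_cycle E ends c1" "is_cycle E ends c2" using is_cycle_mono[of E' ends'] assms(2) by blast+
  then show "cycle_edges c1 = cycle_edges c2" using h assms(1) unfolding cactus2_def by blast
qed

lemma main_step:
  fixes V :: "'v set" and E :: "'e set" and ends :: "'e \<Rightarrow> 'v set" and x :: "'e \<Rightarrow> complex"
  assumes inv: "Inv V E ends x"
    and IH: "\<And>(V'::'v set) (E'::'e set) (ends'::'e \<Rightarrow> 'v set) (x'::'e \<Rightarrow> complex). card V' + card E' < card V + card E \<Longrightarrow> Inv V' E' ends' x' \<Longrightarrow> Zs V' E' ends' x' \<noteq> 0"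
  shows "Zs V E ends x \<noteq> 0"
proof -
  have mg: "multigraph V E ends" and sc: "spanning_connected V E ends" and cac: "cactus2 E ends"
    and wt: "\<forall>e\<in>E. cmod (1 + x e) < 1" using inv unfolding Inv_def by auto
  have fV: "finite V" "V \<noteq> {}" and fE: "finite E" and ee: "\<And>e. e \<in> E \<Longrightarrow> ends e \<subseteq> V \<and> card (ends e) = 2"
    using mg unfolding multigraph_def by auto
  show ?thesis
  proof (cases "card V \<ge> 2")
    case False
    have "card V > 0" using fV by (simp add: card_gt_0_iff)
    then have "card V = 1" using False by linarith
    then obtain v where V: "V = {v}" by (rule card_1_singletonE)
    have "E = {}"
    proof (rule ccontr)
      assume "E \<noteq> {}"
      then obtain e where e: "e \<in> E" by blast
      then have "card (ends e) \<le> card V" using ee fV by (intro card_mono) auto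
      then show False using ee[OF e] V by simp
    qed
    then show ?thesis using Zs_single[OF V, of ends x] by simp
  next
    case cV: True
    show ?thesis
    proof (cases "\<exists>e f. e \<in> E \<and> f \<in> E \<and> e \<noteq> f \<and> ends e = ends f")
      case True
      then obtain e f where ef: "e \<in> E" "f \<in> E" "e \<noteq> f" "ends e = ends f" by blast
      let ?x' = "x(e := (1 + x e) * (1 + x f) - 1)"
      have exs: "(\<exists>g\<in>E - {f}. ends g = S) \<longleftrightarrow> (\<exists>g\<in>E. ends g = S)" for S
      proof
        assume "\<exists>g\<in>E. ends g = S"
        then obtain g where g: "g \<in> E" "ends g = S" by blast
        show "\<exists>g\<in>E - {f}. ends g = S"
        proof (cases "g = f")
          case True then show ?thesis using ef g by (intro bexI[of _ e]) auto
        next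
          case False then show ?thesis using g by blast
        qed
      qed auto
      have er: "edge_rel (E - {f}) ends = edge_rel E ends"
        unfolding edge_rel_def exs ..
      have ad: "adj (E - {f}) ends = adj E ends"
        unfolding adj_def exs ..
      have "Inv V (E - {f}) ends ?x'"
        unfolding Inv_def
      proof (intro conjI)
        show "multigraph V (E - {f}) ends" using mg unfolding multigraph_def by auto
        show "spanning_connected V (E - {f}) ends" using sc unfolding spanning_connected_def er .
        show "cactus2 (E - {f}) ends" using cac unfolding cactus2_def is_cycle_def ad .
        show "\<forall>g\<in>E - {f}. cmod (1 + ?x' g) < 1"
        proof
          fix g assume g: "g \<in> E - {f}"
          show "cmod (1 + ?x' g) < 1"
          proof (cases "g = e")
            case True
            have "cmod (1 + ?x' g) = cmod (1 + x e) * cmod (1 + x f)" using True by (simp add: norm_mult)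
            also have "\<dots> \<le> cmod (1 + x e)" using wt ef by (intro mult_left_le) auto
            also have "\<dots> < 1" using wt ef by auto
            finally show ?thesis .
          next
            case False then show ?thesis using wt g by auto
          qed
        qed
      qed
      moreover have "card V + card (E - {f}) < card V + card E" using card_Diff1_less[OF fE ef(2)] by simp
      ultimately have "Zs V (E - {f}) ends ?x' \<noteq> 0" by (rule IH[rotated])
      then show ?thesis using Zs_parallel[OF fE ef] by simp
    next
      case False
      then have nopar: "\<And>e f. e \<in> E \<Longrightarrow> f \<in> E \<Longrightarrow> ends e = ends f \<Longrightarrow> e = f" by blast
      obtain v0 u where au: "adj E ends v0 u" and deg: "(\<forall>y. adj E ends v0 y \<longrightarrow> y = u) \<or>
           (\<exists>w. w \<noteq> u \<and> adj E ends v0 w \<and> (\<forall>y. adj E ends v0 y \<longrightarrow> y = u \<or> y = w))"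
        using low_degree[OF mg sc cac cV] by blast
      have v0V: "v0 \<in> V" and uV: "u \<in> V" using adj_in_V[OF mg au] by auto
      have uv0: "u \<noteq> v0" using adj_irrefl[OF au] by simp
      obtain a where a: "a \<in> E" "ends a = {v0, u}" using au unfolding adj_def by blast
      have inc: "\<exists>y. ends e = {v0, y} \<and> adj E ends v0 y" if eE: "e \<in> E" and ve: "v0 \<in> ends e" for e
      proof -
        obtain y where "y \<noteq> v0" "ends e = {v0,y}" using card2_ends[of ends e v0] ee[OF eE] ve by blast
        then show ?thesis using eE unfolding adj_def by auto
      qed
      define W where "W = V - {v0}"
      have VW: "V = insert v0 W" "v0 \<notin> W" using v0V unfolding W_def by auto
      have uW: "u \<in> W" using uV uv0 unfolding W_def by simp
      have xa: "cmod (1 + x a) < 1" using wt a by auto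
      have cW: "card W < card V" unfolding W_def by (rule card_Diff1_less[OF fV(1) v0V])
      from deg show ?thesis
      proof
        assume only: "\<forall>y. adj E ends v0 y \<longrightarrow> y = u"
        have oth: "ends e \<subseteq> W" if e: "e \<in> E - {a}" for e
        proof -
          have "v0 \<notin> ends e"
          proof
            assume "v0 \<in> ends e"
            then obtain y where "ends e = {v0, y}" "adj E ends v0 y" using inc e by blast
            then have "ends e = ends a" using only a by simp
            then show False using nopar e a by blast
          qed
          then show ?thesis using ee e unfolding W_def by blast
        qed
        have R: "edge_rel (E - {a}) ends \<subseteq> W \<times> W" by (rule edge_rel_sub) (use oth in blast)
        have Ea: "E = insert a (E - {a})" using a by auto
        have "Inv W (E - {a}) ends x"
          unfolding Inv_def
        proof (intro conjI)
          show "multigraph W (E - {a}) ends"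
            unfolding multigraph_def using fV fE uW oth ee unfolding W_def by auto
          have "conn (insert v0 W) ({(v0,u),(u,v0)} \<union> edge_rel (E - {a}) ends)"
            using sc unfolding sc_conn VW(1)[symmetric] edge_rel_insert[of ends a v0 u "E - {a}", OF a(2), symmetric] Ea[symmetric] .
          then show "spanning_connected W (E - {a}) ends"
            unfolding sc_conn using conn_leaf[OF R VW(2) uW] by simp
          show "cactus2 (E - {a}) ends"
            by (rule cactus_mono[OF cac]) (auto simp: adj_def)
          show "\<forall>e\<in>E - {a}. cmod (1 + x e) < 1" using wt by auto
        qed
        moreover have "card W + card (E - {a}) < card V + card E"
          using cW card_Diff1_less[OF fE a(1)] by simp
        ultimately have "Zs W (E - {a}) ends x \<noteq> 0" by (rule IH[rotated])
        moreover have "x a \<noteq> 0" using xa D_iff by auto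
        moreover have "Zs V E ends x = x a * Zs W (E - {a}) ends x"
          unfolding W_def by (rule Zs_leaf[of E a ends v0 u V x, OF fE a v0V uV uv0]) (use oth in \<open>auto simp: W_def\<close>)
        ultimately show ?thesis by simp
      next
        assume "\<exists>w. w \<noteq> u \<and> adj E ends v0 w \<and> (\<forall>y. adj E ends v0 y \<longrightarrow> y = u \<or> y = w)"
        then obtain w where wu: "w \<noteq> u" and aw: "adj E ends v0 w" and two: "\<forall>y. adj E ends v0 y \<longrightarrow> y = u \<or> y = w"
          by blast
        have wV: "w \<in> V" using adj_in_V[OF mg aw] by auto
        have wv0: "w \<noteq> v0" using adj_irrefl[OF aw] by simp
        have wW: "w \<in> W" using wV wv0 unfolding W_def by simp
        obtain b where b: "b \<in> E" "ends b = {v0, w}" using aw unfolding adj_def by blast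
        have ab: "a \<noteq> b"
        proof
          assume "a = b"
          then have "{v0, u} = {v0, w}" using a b by simp
          then show False using wu uv0 wv0 by (auto simp: doubleton_eq_iff)
        qed
        have oth: "ends e \<subseteq> W" if e: "e \<in> E - {a} - {b}" for e
        proof -
          have "v0 \<notin> ends e"
          proof
            assume "v0 \<in> ends e"
            then obtain y where y: "ends e = {v0, y}" "adj E ends v0 y" using inc e by blast
            have eE: "e \<in> E" using e by blast
            have "y = u \<or> y = w" using two y(2) by blast
            then have "ends e = ends a \<or> ends e = ends b" using y(1) a(2) b(2) by blast
            then have "e = a \<or> e = b" using nopar[OF eE a(1)] nopar[OF eE b(1)] by blast
            then show False using e by blast
          qed
          then show ?thesis using ee e unfolding W_def by blast
        qed
        have xb: "cmod (1 + x b) < 1" using wt b by auto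
        have sw: "x a + x b \<noteq> 0" "cmod (1 + x a * x b / (x a + x b)) < 1"
          using series_weight[OF xa xb] by auto
        define ends' where "ends' = ends(b := {u, w})"
        define x' where "x' = x(b := x a * x b / (x a + x b))"
        define E0 where "E0 = E - {a} - {b}"
        have R: "edge_rel E0 ends \<subseteq> W \<times> W" by (rule edge_rel_sub) (use oth in \<open>auto simp: E0_def\<close>)
        have R': "edge_rel E0 ends' = edge_rel E0 ends" unfolding ends'_def E0_def by (rule edge_rel_cong[symmetric]) auto
        have Eab: "E = insert a (insert b E0)" using a b ab unfolding E0_def by auto
        have Ea: "E - {a} = insert b E0" using a b ab unfolding E0_def by auto
        have F1: "adj E ends p q" if h1: "adj (E - {a}) ends' p q" and h2: "{p,q} \<noteq> {u,w}" for p q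
        proof -
          obtain e where e: "e \<in> E - {a}" "ends' e = {p,q}" "p \<noteq> q" using h1 unfolding adj_def by blast
          have "e \<noteq> b"
          proof
            assume "e = b"
            then have "{p,q} = {u,w}" using e(2) unfolding ends'_def by simp
            then show False using h2 by simp
          qed
          then have "ends e = {p,q}" using e unfolding ends'_def by simp
          then show ?thesis using e unfolding adj_def by blast
        qed
        have nv: "p \<noteq> v0" if h: "adj (E - {a}) ends' p q" for p q
        proof -
          obtain e where e: "e \<in> E - {a}" "ends' e = {p,q}" using h unfolding adj_def by blast
          show ?thesis
          proof (cases "e = b")
            case True
            then have "{p,q} = {u,w}" using e(2) unfolding ends'_def by simp
            then have "p \<in> {u,w}" by blast
            then show ?thesis using uv0 wv0 by blast
          next
            case False
            then have "ends e = {p,q}" "e \<in> E - {a} - {b}" using e unfolding ends'_def by auto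
            then show ?thesis using oth unfolding W_def by blast
          qed
        qed
        have "Inv W (E - {a}) ends' x'"
          unfolding Inv_def
        proof (intro conjI)
          show "multigraph W (E - {a}) ends'"
            unfolding multigraph_def
          proof (intro conjI)
            show "finite W" using fV unfolding W_def by simp
            show "W \<noteq> {}" using uW by blast
            show "finite (E - {a})" using fE by simp
            show "\<forall>e\<in>E - {a}. ends' e \<subseteq> W \<and> card (ends' e) = 2"
            proof
              fix e assume e: "e \<in> E - {a}"
              show "ends' e \<subseteq> W \<and> card (ends' e) = 2"
              proof (cases "e = b")
                case True then show ?thesis using uW wW wu unfolding ends'_def by auto
              next
                case False then show ?thesis using oth[of e] ee[of e] e unfolding ends'_def by auto
              qed
            qed
          qed
          have "conn (insert v0 W) ({(v0,u),(u,v0)} \<union> ({(v0,w),(w,v0)} \<union> edge_rel E0 ends))"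
            using sc unfolding sc_conn VW(1)[symmetric] edge_rel_insert[of ends a v0 u, OF a(2), symmetric]
              edge_rel_insert[of ends b v0 w, OF b(2), symmetric] Eab[symmetric] .
          then have "conn W ({(u,w),(w,u)} \<union> edge_rel E0 ends)"
            using conn_series[OF R VW(2) uW wW] by simp
          moreover have "edge_rel (E - {a}) ends' = {(u,w),(w,u)} \<union> edge_rel E0 ends"
            unfolding Ea R'[symmetric] by (rule edge_rel_insert) (simp add: ends'_def)
          ultimately show "spanning_connected W (E - {a}) ends'" unfolding sc_conn by simp
          show "cactus2 (E - {a}) ends'"
            by (rule cactus_series[OF cac F1 nv au aw])
          show "\<forall>e\<in>E - {a}. cmod (1 + x' e) < 1" using wt sw unfolding x'_def by auto
        qed
        moreover have "card W + card (E - {a}) < card V + card E"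
          using cW card_Diff1_less[OF fE a(1)] by simp
        ultimately have "Zs W (E - {a}) ends' x' \<noteq> 0" by (rule IH[rotated])
        moreover have "Zs V E ends x = (x a + x b) * Zs W (E - {a}) ends' x'"
          unfolding ends'_def x'_def W_def
          by (rule Zs_series[of E a ends v0 u b w V x, OF fE a b(1) b(2) ab v0V]) (use uW wW oth sw in \<open>auto simp: W_def\<close>)
        ultimately show ?thesis using sw by simp
      qed
    qed
  qed
qed

lemma main:
  fixes V :: "'v set" and E :: "'e set" and ends :: "'e \<Rightarrow> 'v set" and x :: "'e \<Rightarrow> complex"
  assumes "Inv V E ends x"
  shows "Zs V E ends x \<noteq> 0"
  using assms
proof (induction "card V + card E" arbitrary: V E ends x rule: less_induct)
  case less
  show ?case by (rule main_step[OF less.prems]) (rule less.hyps)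
qed

lemma poly_R:
  assumes fE: "finite E" and q: "q \<noteq> 0"
  shows "poly (reliability_poly V E ends) q = q ^ card E * Zs V E ends (\<lambda>_. (1 - q) / q)"
proof -
  let ?A = "{S. S \<subseteq> E \<and> spanning_connected V S ends}"
  have A: "?A = {S \<in> Pow E. spanning_connected V S ends}" by auto
  have "poly (reliability_poly V E ends) q = (\<Sum>S\<in>?A. (1 - q) ^ card S * q ^ card (E - S))"
    unfolding reliability_poly_def by (simp add: poly_sum)
  also have "\<dots> = (\<Sum>S\<in>?A. q ^ card E * ((1 - q) / q) ^ card S)"
  proof (rule sum.cong[OF refl])
    fix S assume S: "S \<in> ?A"
    then have SE: "S \<subseteq> E" by simp
    have fS: "finite S" by (rule finite_subset[OF SE fE])
    have cS: "card S \<le> card E" using SE fE by (rule card_mono[rotated])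
    have cD: "card (E - S) = card E - card S" using SE fS by (simp add: card_Diff_subset)
    have "q ^ card E = q ^ (card E - card S) * q ^ card S"
      using cS by (simp add: power_add[symmetric])
    moreover have "((1 - q) / q) ^ card S * q ^ card S = (1 - q) ^ card S"
      using q by (simp add: power_divide)
    ultimately show "(1 - q) ^ card S * q ^ card (E - S) = q ^ card E * ((1 - q) / q) ^ card S"
      unfolding cD by (simp add: algebra_simps)
  qed
  also have "\<dots> = q ^ card E * (\<Sum>S\<in>?A. ((1 - q) / q) ^ card S)"
    by (simp add: sum_distrib_left)
  also have "(\<Sum>S\<in>?A. ((1 - q) / q) ^ card S) = Zs V E ends (\<lambda>_. (1 - q) / q)"
  proof -
    have "(\<Sum>S\<in>?A. ((1 - q) / q) ^ card S) = (\<Sum>S\<in>{S \<in> Pow E. spanning_connected V S ends}. ((1 - q) / q) ^ card S)"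
      by (simp only: A)
    also have "\<dots> = (\<Sum>S\<in>Pow E. if spanning_connected V S ends then ((1 - q) / q) ^ card S else 0)"
      by (rule sum.inter_filter) (simp add: fE)
    also have "\<dots> = Zs V E ends (\<lambda>_. (1 - q) / q)"
      unfolding Zs_def by (rule sum.cong[OF refl]) (simp add: prod_constant)
    finally show ?thesis .
  qed
  finally show ?thesis .
qed

theorem corollary3p4:
  fixes V :: "'v set" and E :: "'e set" and ends :: "'e \<Rightarrow> 'v set"
  assumes "network V E ends"
    and "underlying_is_cactus V E ends"
    and "poly (reliability_poly V E ends) q = 0"
  shows "cmod q \<le> 1"
proof (rule ccontr)
  assume "\<not> cmod q \<le> 1"
  then have q1: "cmod q > 1" by simp
  then have q0: "q \<noteq> 0" by auto
  have mg: "multigraph V E ends" and sc: "spanning_connected V E ends"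
    using assms(1) unfolding network_def by auto
  have fE: "finite E" using mg unfolding multigraph_def by simp
  have cac: "cactus2 E ends" using assms(2) unfolding underlying_is_cactus_def cactus2_def by blast
  have w: "cmod (1 + (1 - q) / q) < 1"
  proof -
    have "1 + (1 - q) / q = inverse q" using q0 by (simp add: field_simps)
    then show ?thesis using q1 by (simp add: norm_inverse inverse_less_1_iff)
  qed
  have "Inv V E ends (\<lambda>_. (1 - q) / q)" unfolding Inv_def using mg sc cac w by auto
  then have "Zs V E ends (\<lambda>_. (1 - q) / q) \<noteq> 0" by (rule main)
  moreover have "poly (reliability_poly V E ends) q = q ^ card E * Zs V E ends (\<lambda>_. (1 - q) / q)"
    by (rule poly_R[OF fE q0])
  ultimately have "poly (reliability_poly V E ends) q \<noteq> 0" using q0 by simp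
  then show False using assms(3) by simp
qed

end
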